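(* Let $n\ge2$ and $(s_1,\dots,s_{n-1},p)\in\mathbb C^n$ with $|p|\ne1$, and let $Q=\left(\frac{s_1-\bar s_{n-1}p}{1-|p|^2},\frac{s_2-\bar s_{n-2}p}{1-|p|^2},\dots,\frac{s_{n-1}-\bar s_1p}{1-|p|^2}\right)\in\mathbb C^{n-1}$. Then $(s_1,\dots,s_{n-1},p)\in\mathbb G_n$ if and only if $(s_1,\dots,s_{n-1},p)\in\widetilde{\mathbb G}_n$ and $Q\in\mathbb G_{n-1}$.
   Context: $\mathbb D$ is the open unit disc. For $m\ge1$, $\pi_m:\mathbb C^m\to\mathbb C^m$ maps $z$ to $(s_1(z),\dots,s_{m-1}(z),z_1\cdots z_m)$, $s_i$ the elementary symmetric polynomials; $\mathbb G_m=\pi_m(\mathbb D^m)$ (so $\mathbb G_1=\mathbb D$). $\widetilde{\mathbb G}_n=\{(y_1,\dots,y_{n-1},q)\in\mathbb C^n: q\in\mathbb D,\ y_j=\beta_j+\bar\beta_{n-j}q$ for some $\beta_j\in\mathbb C$ with $|\beta_j|+|\beta_{n-j}|<\binom{n}{j}$, $j=1,\dots,n-1\}$. *)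

theory Defs
  imports "HOL-Analysis.Analysis"
begin

text \<open>Points of C^m are represented as complex lists of length m (coordinate i+1 is xs ! i).\<close>

definition esym :: "nat \<Rightarrow> complex list \<Rightarrow> complex" where
  "esym k z = (\<Sum>S\<in>{S. S \<subseteq> {0..<length z} \<and> card S = k}. \<Prod>i\<in>S. z ! i)"

definition sym_map :: "nat \<Rightarrow> complex list \<Rightarrow> complex list" where
  "sym_map m z = map (\<lambda>k. esym k z) [1..<m] @ [prod_list z]"

definition symm_polydisc :: "nat \<Rightarrow> complex list set" where
  "symm_polydisc m = {sym_map m z | z. length z = m \<and> (\<forall>i<m. norm (z ! i) < 1)}"

definition Gtilde :: "nat \<Rightarrow> complex list set" where
  "Gtilde n = {x. length x = n \<and> norm (x ! (n - 1)) < 1 \<and>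
     (\<exists>\<beta> :: nat \<Rightarrow> complex.
        \<forall>j\<in>{1..n-1}. x ! (j - 1) = \<beta> j + cnj (\<beta> (n - j)) * x ! (n - 1)
                     \<and> norm (\<beta> j) + norm (\<beta> (n - j)) < real (n choose j))}"

end

theory Submission
  imports Defs "HOL-Computational_Algebra.Fundamental_Theorem_Algebra"
begin

definition pc :: "nat \<Rightarrow> (nat \<Rightarrow> complex) \<Rightarrow> complex poly" where
  "pc m a = (\<Sum>j\<le>m. monom ((-1)^j * a j) (m - j))"
definition rc :: "nat \<Rightarrow> (nat \<Rightarrow> complex) \<Rightarrow> complex poly" where
  "rc m a = (\<Sum>j\<le>m. monom ((-1)^j * cnj (a j)) j)"

lemma coeff_pc: "coeff (pc m a) k = (if k \<le> m then (-1)^(m-k) * a (m-k) else 0)"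
proof -
  have "coeff (pc m a) k = (\<Sum>j\<le>m. if j = m - k \<and> k \<le> m then (-1)^j * a j else 0)"
    unfolding pc_def coeff_sum coeff_monom
    by (rule sum.cong) auto
  also have "\<dots> = (if k \<le> m then (-1)^(m-k) * a (m-k) else 0)"
    by (cases "k \<le> m") (simp_all add: sum.delta')
  finally show ?thesis .
qed

lemma coeff_rc: "coeff (rc m a) k = (if k \<le> m then (-1)^k * cnj (a k) else 0)"
  unfolding rc_def coeff_sum coeff_monom
  by (simp add: sum.delta' eq_commute[of _ k])

lemma pc_cong: "(\<And>j. j \<le> m \<Longrightarrow> a j = b j) \<Longrightarrow> pc m a = pc m b"
  unfolding pc_def by (rule sum.cong) auto

lemma poly_rc: "x \<noteq> 0 \<Longrightarrow> poly (rc m a) x = x^m * cnj (poly (pc m a) (1 / cnj x))"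
  unfolding rc_def pc_def poly_sum poly_monom
  by (simp add: sum_distrib_left power_diff field_simps)

lemma prod_neg: "(\<Prod>i\<in>A. - (f i::'a::comm_ring_1)) = (-1)^card A * prod f A"
proof -
  have "(\<Prod>i\<in>A. - f i) = (\<Prod>i\<in>A. (-1) * f i)" by simp
  also have "\<dots> = (-1)^card A * prod f A" by (simp only: prod.distrib prod_constant)
  finally show ?thesis .
qed

lemma vieta:
  fixes r :: "nat \<Rightarrow> complex"
  shows
  "coeff (\<Prod>i<m. [:-r i, 1:]) k = (if k \<le> m then (-1)^(m-k) *
      (\<Sum>S\<in>{S. S \<subseteq> {0..<m} \<and> card S = m-k}. \<Prod>i\<in>S. r i) else 0)"
proof -
  have "(\<Prod>i<m. [:-r i, 1:]) = (\<Prod>i\<in>{0..<m}. [:-r i:] + monom 1 1)"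
    by (rule prod.cong) (auto simp: monom_altdef)
  also have "\<dots> = (\<Sum>X\<in>Pow {0..<m}. (\<Prod>i\<in>X. [:-r i:]) * (\<Prod>i\<in>{0..<m}-X. monom 1 1))"
    by (rule prod_add) simp
  also have "\<dots> = (\<Sum>X\<in>Pow {0..<m}. monom (\<Prod>i\<in>X. - r i) (m - card X))"
  proof (rule sum.cong)
    fix X assume X: "X \<in> Pow {0..<m}"
    have fin: "finite X" using X finite_subset by auto
    have A1: "(\<Prod>i\<in>X. [:-r i:]) = [:\<Prod>i\<in>X. - r i:]"
      using fin by (induction X rule: finite_induct) (auto simp: mult.commute)
    have C: "card ({0..<m}-X) = m - card X" using X fin by (simp add: card_Diff_subset)
    have B1: "(\<Prod>i\<in>{0..<m}-X. monom (1::complex) 1) = monom 1 (m - card X)"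
      using X fin by (simp add: card_Diff_subset monom_altdef)
    show "(\<Prod>i\<in>X. [:-r i:]) * (\<Prod>i\<in>{0..<m}-X. monom 1 1) = monom (\<Prod>i\<in>X. - r i) (m - card X)"
      by (simp only: A1 B1) (simp add: smult_monom monom_power C)
  qed simp
  finally have eq: "(\<Prod>i<m. [:-r i, 1:]) = (\<Sum>X\<in>Pow {0..<m}. monom (\<Prod>i\<in>X. - r i) (m - card X))" .
  show ?thesis
  proof (cases "k \<le> m")
    case True
    have "coeff (\<Prod>i<m. [:-r i, 1:]) k = (\<Sum>X\<in>Pow {0..<m}. if card X = m - k then (\<Prod>i\<in>X. - r i) else 0)"
      unfolding eq coeff_sum coeff_monom
    proof (rule sum.cong)
      fix X assume "X \<in> Pow {0..<m}"
      then have "card X \<le> m" by (metis PowD card_atLeastLessThan card_mono finite_atLeastLessThan diff_zero)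
      then show "(if m - card X = k then \<Prod>i\<in>X. - r i else 0) = (if card X = m - k then \<Prod>i\<in>X. - r i else 0)"
        using True by auto
    qed simp
    also have "\<dots> = (\<Sum>X\<in>{S. S \<subseteq> {0..<m} \<and> card S = m-k}. \<Prod>i\<in>X. - r i)"
      by (subst sum.inter_filter[symmetric]) (auto intro!: sum.cong)
    also have "\<dots> = (\<Sum>X\<in>{S. S \<subseteq> {0..<m} \<and> card S = m-k}. (-1)^(m-k) * (\<Prod>i\<in>X. r i))"
    proof (rule sum.cong)
      fix X assume "X \<in> {S. S \<subseteq> {0..<m} \<and> card S = m-k}"
      then have "card X = m - k" by simp
      then show "(\<Prod>i\<in>X. - r i) = (-1)^(m-k) * (\<Prod>i\<in>X. r i)"
        using prod_neg[of r X] by simp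
    qed simp
    finally show ?thesis using True by (simp add: sum_distrib_left)
  next
    case False
    have "degree (\<Prod>i<m. [:-r i, 1:]) = m"
      by (subst degree_prod_eq_sum_degree) auto
    then show ?thesis using False by (simp add: coeff_eq_0)
  qed
qed

lemma neg1_pow: "k \<le> n \<Longrightarrow> (-1::complex)^n * (-1)^k = (-1)^(n-k)"
proof -
  assume "k \<le> n"
  then have "(-1::complex)^n = (-1)^(n-k) * (-1)^k" by (simp add: power_add[symmetric])
  then have "(-1::complex)^n * (-1)^k = (-1)^(n-k) * ((-1)^k * (-1)^k)" by simp
  also have "(-1::complex)^k * (-1)^k = 1" by (simp add: power_add[symmetric])
  finally show ?thesis by simp
qed

lemma ident1:
  fixes e q :: "nat \<Rightarrow> complex" and p dd :: complex
  assumes n: "n \<ge> 1" and e0: "e 0 = 1" and en: "e n = p" and dd: "dd = 1 - p * cnj p" "dd \<noteq> 0"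
    and q: "\<And>j. q j = (e j - cnj (e (n-j)) * p) / dd"
  shows "pc n e - smult ((-1)^n * p) (rc n e) = smult dd (pCons 0 (pc (n-1) q))"
proof (rule poly_eqI)
  fix k
  show "coeff (pc n e - smult ((-1)^n * p) (rc n e)) k = coeff (smult dd (pCons 0 (pc (n-1) q))) k"
  proof (cases k)
    case 0
    then show ?thesis by (simp add: coeff_pc coeff_rc e0 en)
  next
    case (Suc k')
    show ?thesis
    proof (cases "k \<le> n")
      case True
      have a: "n - 1 - k' = n - k" "n - (n - k) = k" using Suc True by auto
      have "coeff (smult dd (pCons 0 (pc (n-1) q))) k = dd * ((-1)^(n-k) * q (n-k))"
        using Suc True a by (simp add: coeff_pc)
      also have "\<dots> = (-1)^(n-k) * (e (n-k) - cnj (e k) * p)"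
        using dd(2) a by (simp add: q)
      also have "\<dots> = (-1)^(n-k) * e (n-k) - (-1)^n * p * ((-1)^k * cnj (e k))"
        using neg1_pow[OF True] by (simp add: algebra_simps)
      also have "\<dots> = coeff (pc n e - smult ((-1)^n * p) (rc n e)) k"
        using True by (simp add: coeff_pc coeff_rc)
      finally show ?thesis by simp
    next
      case False
      then show ?thesis using Suc n by (simp add: coeff_pc coeff_rc)
    qed
  qed
qed

lemma ident2:
  fixes e q :: "nat \<Rightarrow> complex" and p dd :: complex
  assumes n: "n \<ge> 1" and e0: "e 0 = 1" and en: "e n = p" and dd: "dd = 1 - p * cnj p" "dd \<noteq> 0"
    and q: "\<And>j. q j = (e j - cnj (e (n-j)) * p) / dd"
  shows "smult dd (pc n e) = smult dd (pCons 0 (pc (n-1) q)) + smult ((-1)^n * p * dd) (rc (n-1) q)"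
proof (rule poly_eqI)
  fix k
  have q0: "q 0 = 1" using dd by (simp add: q e0 en)
  have cdd: "cnj dd = dd" using dd by simp
  show "coeff (smult dd (pc n e)) k = coeff (smult dd (pCons 0 (pc (n-1) q)) + smult ((-1)^n * p * dd) (rc (n-1) q)) k"
  proof (cases k)
    case 0
    then show ?thesis using n by (simp add: coeff_pc coeff_rc e0 en q0)
  next
    case (Suc k')
    show ?thesis
    proof (cases "k \<le> n - 1")
      case True
      have a: "n - 1 - k' = n - k" "n - (n - k) = k" using Suc True by auto
      have kn: "k \<le> n" using True by simp
      have "coeff (smult dd (pCons 0 (pc (n-1) q)) + smult ((-1)^n * p * dd) (rc (n-1) q)) k
          = dd * ((-1)^(n-k) * q (n-k)) + (-1)^n * p * dd * ((-1)^k * cnj (q k))"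
        using Suc True a by (simp add: coeff_pc coeff_rc)
      also have "\<dots> = (-1)^(n-k) * (dd * q (n-k)) + ((-1)^n * (-1)^k) * p * cnj (dd * q k)"
        using cdd by (simp add: algebra_simps)
      also have "\<dots> = (-1)^(n-k) * ((e (n-k) - cnj (e k) * p) + p * (cnj (e k) - e (n - k) * cnj p))"
      proof -
        have h1: "dd * q (n-k) = e (n-k) - cnj (e k) * p" using dd(2) a by (simp add: q)
        have h2: "cnj (dd * q k) = cnj (e k) - e (n - k) * cnj p"
        proof -
          have "dd * q k = e k - cnj (e (n-k)) * p" using dd(2) by (simp add: q)
          then show ?thesis by simp
        qed
        show ?thesis unfolding h1 h2 neg1_pow[OF kn] by (simp add: algebra_simps)
      qed
      also have "\<dots> = (-1)^(n-k) * (dd * e (n-k))"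
        by (simp add: dd(1) algebra_simps)
      also have "\<dots> = coeff (smult dd (pc n e)) k"
        using kn by (simp add: coeff_pc)
      finally show ?thesis by simp
    next
      case False
      then show ?thesis using Suc q0 e0 n by (cases "k = n") (auto simp: coeff_pc coeff_rc)
    qed
  qed
qed

definition ex1 :: "complex list \<Rightarrow> nat \<Rightarrow> complex" where
  "ex1 w j = (if j = 0 then 1 else w ! (j - 1))"

lemma esym0: "esym 0 z = 1"
proof -
  have "{S. S \<subseteq> {0..<length z} \<and> card S = 0} = {{}}"
    by (auto dest: finite_subset)
  then show ?thesis unfolding esym_def by simp
qed

lemma esym_full: "esym (length z) z = prod_list z"
proof -
  have "{S. S \<subseteq> {0..<length z} \<and> card S = length z} = {{0..<length z}}"
  proof (intro set_eqI iffI)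
    fix S assume "S \<in> {S. S \<subseteq> {0..<length z} \<and> card S = length z}"
    then show "S \<in> {{0..<length z}}" using card_subset_eq[of "{0..<length z}" S] by simp
  qed auto
  then show ?thesis unfolding esym_def by (simp add: prod.list_conv_set_nth)
qed

lemma length_sym_map: "m \<ge> 1 \<Longrightarrow> length (sym_map m z) = m"
  unfolding sym_map_def by simp

lemma ex1_sym:
  assumes "length z = m" "m \<ge> 1" "j \<le> m"
  shows "ex1 (sym_map m z) j = esym j z"
proof (cases "j = 0")
  case True then show ?thesis by (simp add: ex1_def esym0)
next
  case False
  show ?thesis
  proof (cases "j = m")
    case True
    then show ?thesis using assms False
      by (simp add: ex1_def sym_map_def nth_append esym_full[symmetric])
  next
    case False2: False
    have "j - 1 < m - 1" "j \<noteq> 0" using assms False2 \<open>j \<noteq> 0\<close> by auto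
    then show ?thesis
      by (simp add: ex1_def sym_map_def nth_append)
  qed
qed

lemma Pz_eq:
  assumes "length z = m" "m \<ge> 1"
  shows "(\<Prod>i<m. [:-(z!i), 1:]) = pc m (ex1 (sym_map m z))"
proof (rule poly_eqI)
  fix k
  show "coeff (\<Prod>i<m. [:-(z!i), 1:]) k = coeff (pc m (ex1 (sym_map m z))) k"
    unfolding vieta coeff_pc using assms by (simp add: ex1_sym esym_def)
qed

lemma B1:
  assumes "w \<in> symm_polydisc m" "m \<ge> 1"
  shows "length w = m \<and> (\<exists>z. length z = m \<and> (\<forall>i<m. norm (z!i) < 1) \<and>
           pc m (ex1 w) = (\<Prod>i<m. [:-(z!i), 1:]) \<and> w = sym_map m z)"
proof -
  obtain z where z: "w = sym_map m z" "length z = m" "\<forall>i<m. norm (z ! i) < 1"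
    using assms(1) unfolding symm_polydisc_def by auto
  show ?thesis using z Pz_eq[OF z(2) assms(2)] length_sym_map[OF assms(2)] by auto
qed

lemma B2:
  assumes "length w = m" "m \<ge> 1" "\<forall>x. poly (pc m (ex1 w)) x = 0 \<longrightarrow> norm x < 1"
  shows "w \<in> symm_polydisc m"
proof -
  let ?P = "pc m (ex1 w)"
  have cm: "coeff ?P m = 1" by (simp add: coeff_pc ex1_def)
  have dg: "degree ?P = m"
  proof (rule antisym)
    show "degree ?P \<le> m" by (rule degree_le) (simp add: coeff_pc)
    show "m \<le> degree ?P" using cm by (metis le_degree zero_neq_one)
  qed
  have lc: "lead_coeff ?P = 1" using cm dg by simp
  obtain root where rt: "smult (lead_coeff ?P) (\<Prod>i<degree ?P. [:-root i, 1:]) = ?P"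
    using complex_poly_decompose' by blast
  define z where "z = map root [0..<m]"
  have lz: "length z = m" by (simp add: z_def)
  have zi: "z ! i = root i" if "i < m" for i using that by (simp add: z_def)
  have Peq: "?P = (\<Prod>i<m. [:-(z!i), 1:])"
  proof -
    have "?P = (\<Prod>i<m. [:-root i, 1:])" using rt lc dg by simp
    also have "\<dots> = (\<Prod>i<m. [:-(z!i), 1:])" by (rule prod.cong) (auto simp: zi)
    finally show ?thesis .
  qed
  have zin: "\<forall>i<m. norm (z ! i) < 1"
  proof (intro allI impI)
    fix i assume "i < m"
    then have "poly ?P (z!i) = 0" unfolding Peq poly_prod
      by (intro prod_zero) auto
    then show "norm (z ! i) < 1" using assms(3) by blast
  qed
  have PP: "?P = pc m (ex1 (sym_map m z))" using Peq Pz_eq[OF lz assms(2)] by simp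
  have "w = sym_map m z"
  proof (rule nth_equalityI)
    show "length w = length (sym_map m z)" using assms length_sym_map by simp
    fix i assume "i < length w"
    then have i: "i < m" using assms by simp
    have "coeff ?P (m - Suc i) = coeff (pc m (ex1 (sym_map m z))) (m - Suc i)" using PP by simp
    then have "ex1 w (Suc i) = ex1 (sym_map m z) (Suc i)"
      using i by (simp add: coeff_pc Suc_diff_Suc)
    then show "w ! i = sym_map m z ! i" by (simp add: ex1_def)
  qed
  then show ?thesis using lz zin unfolding symm_polydisc_def by blast
qed

lemma fac_ineq:
  fixes x z :: complex
  assumes "norm z < 1" "norm x \<ge> 1"
  shows "norm (1 - x * cnj z) \<le> norm (x - z)"
proof -
  have h1: "(Re x)^2 + (Im x)^2 \<ge> 1" using assms(2)
    by (metis cmod_power2 one_le_power)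
  have h2: "(Re z)^2 + (Im z)^2 \<le> 1" using assms(1)
    by (metis cmod_power2 less_eq_real_def norm_ge_zero power_le_one)
  have "0 \<le> ((Re x)^2 + (Im x)^2 - 1) * (1 - ((Re z)^2 + (Im z)^2))"
    using h1 h2 by (intro mult_nonneg_nonneg) auto
  then have "(norm (1 - x * cnj z))^2 \<le> (norm (x - z))^2"
    unfolding cmod_power2 by (simp add: power2_eq_square algebra_simps)
  then show ?thesis by (rule power2_le_imp_le) simp
qed

lemma ineqC:
  assumes "pc m a = (\<Prod>i<m. [:-(z i), 1:])" "\<forall>i<m. norm (z i) < 1" "norm x \<ge> 1"
  shows "norm (poly (rc m a) x) \<le> norm (poly (pc m a) x)"
proof -
  have x0: "x \<noteq> 0" using assms(3) by auto
  have "poly (rc m a) x = x^m * cnj (\<Prod>i<m. 1 / cnj x - z i)"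
    using poly_rc[OF x0, of m a] assms(1) by (simp add: poly_prod)
  also have "\<dots> = (\<Prod>i<m. x) * (\<Prod>i<m. 1 / x - cnj (z i))" by simp
  also have "\<dots> = (\<Prod>i<m. x * (1 / x - cnj (z i)))" by (simp only: prod.distrib)
  also have "\<dots> = (\<Prod>i<m. 1 - x * cnj (z i))"
    using x0 by (intro prod.cong) (auto simp: algebra_simps)
  finally have r: "poly (rc m a) x = (\<Prod>i<m. 1 - x * cnj (z i))" .
  have p: "poly (pc m a) x = (\<Prod>i<m. x - z i)" using assms(1) by (simp add: poly_prod)
  show ?thesis unfolding r p prod_norm[symmetric]
    by (intro prod_mono) (use assms fac_ineq in auto)
qed

lemma prod_lt1:
  fixes f :: "nat \<Rightarrow> complex"
  assumes "finite S" "S \<noteq> {}" "\<forall>i\<in>S. norm (f i) < 1"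
  shows "norm (\<Prod>i\<in>S. f i) < 1"
proof -
  obtain i0 where i0: "i0 \<in> S" using assms(2) by auto
  have "norm (\<Prod>i\<in>S. f i) = norm (f i0) * (\<Prod>i\<in>S - {i0}. norm (f i))"
    using assms(1) i0 by (simp add: prod.remove prod_norm[symmetric] norm_mult)
  also have "\<dots> \<le> norm (f i0) * 1"
    using assms by (intro mult_left_mono prod_le_1) (auto intro: less_imp_le)
  also have "\<dots> < 1" using assms i0 by simp
  finally show ?thesis .
qed

lemma esym_bound:
  assumes "\<forall>i<length w. norm (w!i) < 1" "1 \<le> j" "j \<le> length w"
  shows "norm (esym j w) < real (length w choose j)"
proof -
  let ?F = "{S. S \<subseteq> {0..<length w} \<and> card S = j}"
  have fin: "finite ?F" by simp
  have ne: "?F \<noteq> {}" using assms by (intro ex_in_conv[THEN iffD1] exI[of _ "{0..<j}"]) auto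
  have "norm (esym j w) \<le> (\<Sum>S\<in>?F. norm (\<Prod>i\<in>S. w!i))"
    unfolding esym_def by (rule norm_sum)
  also have "\<dots> < (\<Sum>S\<in>?F. 1)"
  proof (rule sum_strict_mono[OF fin ne])
    fix S assume S: "S \<in> ?F"
    then have "finite S" "S \<noteq> {}" using assms(2) finite_subset by auto
    then show "norm (\<Prod>i\<in>S. w!i) < 1" using S assms(1) by (intro prod_lt1) auto
  qed
  also have "\<dots> = real (length w choose j)" using n_subsets[of "{0..<length w}" j] by simp
  finally show ?thesis .
qed

theorem mainTheorem7:
  fixes n :: nat and s :: "complex list" and p :: complex
  assumes "n \<ge> 2" and "length s = n - 1" and "norm p \<noteq> 1"
  shows "s @ [p] \<in> symm_polydisc n \<longleftrightarrow>
    (s @ [p] \<in> Gtilde n \<and>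
     map (\<lambda>j. (s ! (j - 1) - cnj (s ! (n - j - 1)) * p) / complex_of_real (1 - (norm p)^2)) [1..<n]
       \<in> symm_polydisc (n - 1))"
proof -
  define s' where "s' = s @ [p]"
  define Q where "Q = map (\<lambda>j. (s ! (j - 1) - cnj (s ! (n - j - 1)) * p) / complex_of_real (1 - (norm p)^2)) [1..<n]"
  define e where "e = ex1 s'"
  define dd where "dd = 1 - p * cnj p"
  define q where "q = (\<lambda>j. (e j - cnj (e (n-j)) * p) / dd)"
  define c where "c = (-1::complex)^n * p"
  have n1: "n \<ge> 1" using assms by simp
  have n2: "n - 1 \<ge> 1" using assms by simp
  have ls': "length s' = n" using assms by (simp add: s'_def)
  have lQ: "length Q = n - 1" by (simp add: Q_def)
  have e0: "e 0 = 1" by (simp add: e_def ex1_def)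
  have en: "e n = p" using assms n1 by (simp add: e_def ex1_def s'_def nth_append)
  have s'n: "s' ! (n - 1) = p" using assms by (simp add: s'_def nth_append)
  have ddr: "dd = complex_of_real (1 - (norm p)^2)"
    using complex_norm_square[of p] by (simp add: dd_def)
  have dd0: "dd \<noteq> 0"
  proof
    assume "dd = 0"
    then have "complex_of_real (1 - (norm p)^2) = 0" by (simp only: ddr)
    then have "1 - (norm p)^2 = 0" by (simp only: of_real_eq_0_iff)
    then have "(norm p)^2 = 1" by simp
    then show False using assms(3) norm_ge_zero[of p] by (simp add: power2_eq_1_iff)
  qed
  have ej: "e j = s ! (j - 1)" if "1 \<le> j" "j \<le> n - 1" for j
  proof -
    have "j - 1 < length s" "j \<noteq> 0" using that assms by auto
    then show ?thesis by (simp add: e_def ex1_def s'_def nth_append)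
  qed
  have eQ: "ex1 Q j = q j" if "j \<le> n - 1" for j
  proof (cases "j = 0")
    case True then show ?thesis using dd0 by (simp add: ex1_def q_def e0 en dd_def)
  next
    case False
    have a: "e (n - j) = s ! (n - j - 1)" using ej[of "n-j"] False that n1 by simp
    have h: "[1..<n] ! (j - 1) = j" "j - 1 < length [1..<n]" using False that n1 by auto
    have "ex1 Q j = (s ! (j - 1) - cnj (s ! (n - j - 1)) * p) / dd"
      using False unfolding ex1_def Q_def ddr by (simp only: nth_map[OF h(2)] h(1) if_False)
    then show ?thesis using ej[of j] False that a by (simp add: q_def)
  qed
  have pcQ: "pc (n-1) (ex1 Q) = pc (n-1) q" by (rule pc_cong) (simp add: eQ)
  have I1: "poly (pc n e) x - c * poly (rc n e) x = dd * (x * poly (pc (n-1) q) x)" for x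
  proof -
    have "poly (pc n e - smult c (rc n e)) x = poly (smult dd (pCons 0 (pc (n-1) q))) x"
      using ident1[OF n1 e0 en dd_def dd0, of q] by (simp add: q_def c_def)
    then show ?thesis by simp
  qed
  have I2: "dd * poly (pc n e) x = dd * (x * poly (pc (n-1) q) x) + c * dd * poly (rc (n-1) q) x" for x
  proof -
    have "poly (smult dd (pc n e)) x = poly (smult dd (pCons 0 (pc (n-1) q)) + smult (c * dd) (rc (n-1) q)) x"
      using ident2[OF n1 e0 en dd_def dd0, of q] by (simp add: q_def c_def)
    then show ?thesis by simp
  qed
  have nc: "norm c = norm p" by (simp add: c_def norm_mult norm_power)
  have fwd: "s' \<in> Gtilde n \<and> Q \<in> symm_polydisc (n - 1)" if G: "s' \<in> symm_polydisc n"
  proof -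
    obtain z where z: "length z = n" "\<forall>i<n. norm (z!i) < 1"
        "pc n e = (\<Prod>i<n. [:-(z!i), 1:])" "s' = sym_map n z"
      using B1[OF G n1] e_def by blast
    have "p = prod_list z"
      using en ex1_sym[OF z(1) n1, of n] z(4) esym_full[of z] z(1) by (simp add: e_def)
    then have pl: "norm p < 1"
      using z(1,2) n1 by (simp add: prod.list_conv_set_nth, intro prod_lt1) auto
    have Qroots: "\<forall>x. poly (pc (n-1) (ex1 Q)) x = 0 \<longrightarrow> norm x < 1"
    proof (intro allI impI)
      fix x assume R0: "poly (pc (n-1) (ex1 Q)) x = 0"
      show "norm x < 1"
      proof (rule ccontr)
        assume "\<not> norm x < 1"
        then have x1: "norm x \<ge> 1" by simp
        have "poly (pc n e) x = c * poly (rc n e) x" using I1[of x] R0 pcQ by simp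
        then have "norm (poly (pc n e) x) = norm p * norm (poly (rc n e) x)" by (simp add: norm_mult nc)
        also have "\<dots> \<le> norm p * norm (poly (pc n e) x)"
          using ineqC[of n e "\<lambda>i. z!i" x] z x1 by (intro mult_left_mono) auto
        finally have "poly (pc n e) x = 0" using pl
          by (metis mult_le_cancel_right1 norm_eq_zero norm_ge_zero not_le zero_less_norm_iff)
        then have "(\<Prod>i<n. x - z!i) = 0" using z(3) by (simp add: poly_prod)
        then obtain i where "i < n" "x = z!i" by auto
        then show False using z(2) x1 by auto
      qed
    qed
    have QG: "Q \<in> symm_polydisc (n-1)" using B2[OF lQ _ Qroots] assms by simp
    obtain w where w: "length w = n - 1" "\<forall>i<n-1. norm (w!i) < 1" "Q = sym_map (n-1) w"
      using B1[OF QG n2] by blast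
    have qb: "norm (q j) < real ((n-1) choose j)" if "1 \<le> j" "j \<le> n - 1" for j
    proof -
      have "q j = esym j w" using eQ[of j] that ex1_sym[OF w(1), of j] w(3) assms by simp
      then show ?thesis using esym_bound[of w j] w that by simp
    qed
    have "s' \<in> Gtilde n"
      unfolding Gtilde_def
    proof (intro CollectI conjI exI[of _ q] ballI)
      show "length s' = n" by (rule ls')
      show "norm (s' ! (n - 1)) < 1" using pl s'n by simp
      fix j assume j: "j \<in> {1..n-1}"
      have ej': "s' ! (j - 1) = e j" using j by (simp add: e_def ex1_def)
      have "n - (n - j) = j" using j by auto
      then have qnj: "q (n - j) = (e (n-j) - cnj (e j) * p) / dd" by (simp add: q_def)
      show "s' ! (j - 1) = q j + cnj (q (n - j)) * s' ! (n - 1)"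
      proof -
        have cdd: "cnj dd = dd" by (simp add: dd_def)
        have a1: "q j * dd = e j - cnj (e (n-j)) * p" using dd0 by (simp add: q_def)
        have "cnj (q (n-j) * dd) = cnj (e (n-j) - cnj (e j) * p)" unfolding qnj using dd0 by simp
        then have a2: "cnj (q (n-j)) * dd = cnj (e (n-j)) - e j * cnj p" using cdd by simp
        have "(q j + cnj (q (n - j)) * p) * dd = q j * dd + (cnj (q (n-j)) * dd) * p"
          by (simp add: algebra_simps)
        also have "\<dots> = e j * dd" unfolding a1 a2 by (simp add: dd_def algebra_simps)
        finally have "(q j + cnj (q (n - j)) * p) * dd = e j * dd" .
        then have "q j + cnj (q (n - j)) * p = e j" using dd0 by simp
        then show ?thesis unfolding ej' s'n by simp
      qed
      have "norm (q j) + norm (q (n - j)) < real ((n-1) choose j) + real ((n-1) choose (n-j))"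
      proof -
        have "1 \<le> n - j" "n - j \<le> n - 1" "1 \<le> j" "j \<le> n - 1" using j by auto
        then show ?thesis using qb[of j] qb[of "n-j"] by (intro add_strict_mono) auto
      qed
      also have "\<dots> = real (n choose j)"
      proof -
        have "(n-1) choose (n-j) = (n-1) choose (j-1)"
          using j by (subst binomial_symmetric) (auto simp: Suc_diff_Suc)
        moreover have "n choose j = ((n-1) choose (j-1)) + ((n-1) choose j)"
          using j binomial_Suc_Suc[of "n-1" "j-1"] n1 by simp
        ultimately show ?thesis by simp
      qed
      finally show "norm (q j) + norm (q (n - j)) < real (n choose j)" .
    qed
    then show ?thesis using QG by simp
  qed
  have bwd: "s' \<in> symm_polydisc n" if T: "s' \<in> Gtilde n" and QG: "Q \<in> symm_polydisc (n - 1)"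
  proof -
    have pl: "norm p < 1" using T s'n unfolding Gtilde_def by simp
    obtain w where w: "length w = n - 1" "\<forall>i<n-1. norm (w!i) < 1"
        "pc (n-1) (ex1 Q) = (\<Prod>i<n-1. [:-(w!i), 1:])"
      using B1[OF QG n2] by blast
    have wq: "pc (n-1) q = (\<Prod>i<n-1. [:-(w!i), 1:])" using w(3) pcQ by simp
    have "\<forall>x. poly (pc n (ex1 s')) x = 0 \<longrightarrow> norm x < 1"
    proof (intro allI impI)
      fix x assume P0: "poly (pc n (ex1 s')) x = 0"
      show "norm x < 1"
      proof (rule ccontr)
        assume "\<not> norm x < 1"
        then have x1: "norm x \<ge> 1" by simp
        have "dd * (x * poly (pc (n-1) q) x + c * poly (rc (n-1) q) x) = 0"
          using I2[of x] P0 by (simp add: e_def algebra_simps)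
        then have "x * poly (pc (n-1) q) x = - c * poly (rc (n-1) q) x" using dd0
          by (simp add: add_eq_0_iff)
        then have "norm x * norm (poly (pc (n-1) q) x) = norm p * norm (poly (rc (n-1) q) x)"
          by (metis nc norm_minus_cancel norm_mult mult_minus_left)
        also have "\<dots> \<le> norm p * norm (poly (pc (n-1) q) x)"
          using ineqC[of "n-1" q "\<lambda>i. w!i" x] wq w x1 by (intro mult_left_mono) auto
        finally have le: "norm x * norm (poly (pc (n-1) q) x) \<le> norm p * norm (poly (pc (n-1) q) x)" .
        have "poly (pc (n-1) q) x = 0"
        proof (rule ccontr)
          assume "poly (pc (n-1) q) x \<noteq> 0"
          then have "norm x \<le> norm p" using le by simp
          then show False using x1 pl by simp
        qed
        then have "(\<Prod>i<n-1. x - w!i) = 0" using wq by (simp add: poly_prod)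
        then obtain i where "i < n - 1" "x = w!i" by auto
        then show False using w(2) x1 by auto
      qed
    qed
    then show ?thesis using B2[OF ls' n1] by simp
  qed
  show ?thesis using fwd bwd unfolding s'_def[symmetric] Q_def[symmetric] by blast
qed

end
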